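(* Let $K$ be a field of characteristic zero, $R=K[X_1,\ldots,X_n]$, $R_{n-1}=K[X_1,\ldots,X_{n-1}]$, and let $M$ be a simple left module over the Weyl algebra $A_n(K)$ with $\mathrm{Ass}_R(M)=\{P\}$. Set $Q=P\cap R_{n-1}$. Then \[H_0(\partial_n;M)=0\implies P=QR,\qquad H_1(\partial_n;M)\ne0\implies P=QR.\]
   Context: $H_0(\partial_n;M)=M/\partial_nM$ and $H_1(\partial_n;M)=\ker(\partial_n\colon M\to M)$ (Koszul homology with respect to the single $K$-linear map $\partial_n$). *)

theory Defs
  imports Complex_Main "HOL-Library.Poly_Mapping"
begin

text \<open>The paper's variable X_i is our variable
  i-1, so R = K[X_1..X_n] is the set of polynomials involving only variables < n.\<close>

type_synonym 'k mpoly = "(nat \<Rightarrow>\<^sub>0 nat) \<Rightarrow>\<^sub>0 'k"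

definition polys_in :: "nat \<Rightarrow> 'k::comm_ring_1 mpoly set" where
  "polys_in n = {p. \<forall>m \<in> Poly_Mapping.keys p. Poly_Mapping.keys m \<subseteq> {..<n}}"

definition ideal_in :: "nat \<Rightarrow> 'k::comm_ring_1 mpoly set \<Rightarrow> bool" where
  "ideal_in n I \<longleftrightarrow> I \<subseteq> polys_in n \<and> 0 \<in> I \<and> (\<forall>a\<in>I. \<forall>b\<in>I. a + b \<in> I)
     \<and> (\<forall>r\<in>polys_in n. \<forall>a\<in>I. r * a \<in> I)"

definition prime_ideal_in :: "nat \<Rightarrow> 'k::comm_ring_1 mpoly set \<Rightarrow> bool" where
  "prime_ideal_in n P \<longleftrightarrow> ideal_in n P \<and> P \<noteq> polys_in n
     \<and> (\<forall>a\<in>polys_in n. \<forall>b\<in>polys_in n. a * b \<in> P \<longrightarrow> a \<in> P \<or> b \<in> P)"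

definition ideal_gen_in :: "nat \<Rightarrow> 'k::comm_ring_1 mpoly set \<Rightarrow> 'k mpoly set" where
  "ideal_gen_in n Q = {p. \<exists>F r. finite F \<and> F \<subseteq> Q \<and> (\<forall>q\<in>F. r q \<in> polys_in n)
                              \<and> p = (\<Sum>q\<in>F. r q * q)}"

text \<open>A left module over the Weyl algebra A_n(K): a K-module (scale) with operators
  xop i (multiplication by X_(i+1)) and dop i (action of the derivation d_(i+1)), i < n,
  satisfying the defining relations of A_n(K).\<close>

definition weyl_module ::
  "nat \<Rightarrow> ('k::comm_ring_1 \<Rightarrow> 'm::ab_group_add \<Rightarrow> 'm) \<Rightarrow> (nat \<Rightarrow> 'm \<Rightarrow> 'm) \<Rightarrow> (nat \<Rightarrow> 'm \<Rightarrow> 'm) \<Rightarrow> bool" where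
  "weyl_module n scale xop dop \<longleftrightarrow> module scale
    \<and> (\<forall>i<n. \<forall>u v. xop i (u + v) = xop i u + xop i v)
    \<and> (\<forall>i<n. \<forall>u v. dop i (u + v) = dop i u + dop i v)
    \<and> (\<forall>i<n. \<forall>c v. xop i (scale c v) = scale c (xop i v))
    \<and> (\<forall>i<n. \<forall>c v. dop i (scale c v) = scale c (dop i v))
    \<and> (\<forall>i<n. \<forall>j<n. \<forall>v. xop i (xop j v) = xop j (xop i v))
    \<and> (\<forall>i<n. \<forall>j<n. \<forall>v. dop i (dop j v) = dop j (dop i v))
    \<and> (\<forall>i<n. \<forall>j<n. \<forall>v. dop i (xop j v) - xop j (dop i v) = (if i = j then v else 0))"

definition weyl_submodule ::
  "nat \<Rightarrow> ('k \<Rightarrow> 'm::ab_group_add \<Rightarrow> 'm) \<Rightarrow> (nat \<Rightarrow> 'm \<Rightarrow> 'm) \<Rightarrow> (nat \<Rightarrow> 'm \<Rightarrow> 'm) \<Rightarrow> 'm set \<Rightarrow> bool" where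
  "weyl_submodule n scale xop dop N \<longleftrightarrow> 0 \<in> N \<and> (\<forall>u\<in>N. \<forall>v\<in>N. u + v \<in> N)
    \<and> (\<forall>c. \<forall>v\<in>N. scale c v \<in> N) \<and> (\<forall>i<n. \<forall>v\<in>N. xop i v \<in> N \<and> dop i v \<in> N)"

definition simple_weyl_module ::
  "nat \<Rightarrow> ('k::comm_ring_1 \<Rightarrow> 'm::ab_group_add \<Rightarrow> 'm) \<Rightarrow> (nat \<Rightarrow> 'm \<Rightarrow> 'm) \<Rightarrow> (nat \<Rightarrow> 'm \<Rightarrow> 'm) \<Rightarrow> bool" where
  "simple_weyl_module n scale xop dop \<longleftrightarrow> weyl_module n scale xop dop
    \<and> (\<exists>v::'m. v \<noteq> 0)
    \<and> (\<forall>N. weyl_submodule n scale xop dop N \<longrightarrow> N = {0} \<or> N = UNIV)"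

definition mono_act :: "nat \<Rightarrow> (nat \<Rightarrow> 'm \<Rightarrow> 'm) \<Rightarrow> (nat \<Rightarrow>\<^sub>0 nat) \<Rightarrow> 'm \<Rightarrow> 'm" where
  "mono_act n xop m = foldr (\<lambda>i f. (xop i ^^ Poly_Mapping.lookup m i) \<circ> f) [0..<n] id"

definition poly_act ::
  "nat \<Rightarrow> ('k::comm_ring_1 \<Rightarrow> 'm::ab_group_add \<Rightarrow> 'm) \<Rightarrow> (nat \<Rightarrow> 'm \<Rightarrow> 'm) \<Rightarrow> 'k mpoly \<Rightarrow> 'm \<Rightarrow> 'm" where
  "poly_act n scale xop p v = (\<Sum>m\<in>Poly_Mapping.keys p. scale (Poly_Mapping.lookup p m) (mono_act n xop m v))"

definition ann_in ::
  "nat \<Rightarrow> ('k::comm_ring_1 \<Rightarrow> 'm::ab_group_add \<Rightarrow> 'm) \<Rightarrow> (nat \<Rightarrow> 'm \<Rightarrow> 'm) \<Rightarrow> 'm \<Rightarrow> 'k mpoly set" where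
  "ann_in n scale xop v = {p \<in> polys_in n. poly_act n scale xop p v = 0}"

definition Ass_in ::
  "nat \<Rightarrow> ('k::comm_ring_1 \<Rightarrow> 'm::ab_group_add \<Rightarrow> 'm) \<Rightarrow> (nat \<Rightarrow> 'm \<Rightarrow> 'm) \<Rightarrow> 'k mpoly set set" where
  "Ass_in n scale xop = {P. prime_ideal_in n P \<and> (\<exists>v. P = ann_in n scale xop v)}"

end

theory Submission imports Defs begin

definition G :: "(nat \<Rightarrow> 'm \<Rightarrow> 'm) \<Rightarrow> nat list \<Rightarrow> (nat \<Rightarrow>\<^sub>0 nat) \<Rightarrow> 'm \<Rightarrow> 'm" where
  "G xop L m = foldr (\<lambda>i f. (xop i ^^ Poly_Mapping.lookup m i) \<circ> f) L id"

lemma G_Nil[simp]: "G xop [] m v = v" by (simp add: G_def)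
lemma G_Cons[simp]: "G xop (i#L) m v = (xop i ^^ Poly_Mapping.lookup m i) (G xop L m v)"
  by (simp add: G_def)

lemma mono_act_G: "mono_act n xop m = G xop [0..<n] m"
  by (simp add: mono_act_def G_def)

lemma G_cong: "(\<And>i. i \<in> set L \<Longrightarrow> Poly_Mapping.lookup a i = Poly_Mapping.lookup b i) \<Longrightarrow> G xop L a v = G xop L b v"
  by (induction L arbitrary: v) auto

lemma additive_sum:
  fixes f :: "'a::ab_group_add \<Rightarrow> 'b::ab_group_add"
  assumes "\<And>u v. f (u + v) = f u + f v"
  shows "f (sum g A) = (\<Sum>x\<in>A. f (g x))"
proof -
  have z: "f 0 = 0" using assms[of 0 0] by simp
  show ?thesis by (induction A rule: infinite_finite_induct) (auto simp: z assms)
qed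

lemma poly_sum_single: "(p::'a \<Rightarrow>\<^sub>0 'b::comm_monoid_add) = (\<Sum>a\<in>Poly_Mapping.keys p. Poly_Mapping.single a (Poly_Mapping.lookup p a))"
  by (rule poly_mapping_eqI) (auto simp: lookup_sum lookup_single when_def in_keys_iff)

definition pd :: "nat \<Rightarrow> 'k::comm_ring_1 mpoly \<Rightarrow> 'k mpoly" where
  "pd j p = (\<Sum>a\<in>Poly_Mapping.keys p. Poly_Mapping.single (a - Poly_Mapping.single j 1) (of_nat (Poly_Mapping.lookup a j) * Poly_Mapping.lookup p a))"

lemma keys_add_nat: "Poly_Mapping.keys ((a::nat \<Rightarrow>\<^sub>0 nat) + b) = Poly_Mapping.keys a \<union> Poly_Mapping.keys b"
  by (auto simp: in_keys_iff lookup_add)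

lemma polys_in_mult: "p \<in> polys_in n \<Longrightarrow> q \<in> polys_in n \<Longrightarrow> p * q \<in> polys_in n"
  unfolding polys_in_def using keys_mult[of p q] by (force simp: keys_add_nat)

lemma polys_in_one: "1 \<in> polys_in n"
  unfolding polys_in_def by simp

lemma polys_in_pow: "p \<in> polys_in n \<Longrightarrow> p ^ k \<in> polys_in n"
  by (induction k) (auto simp: polys_in_one polys_in_mult)

lemma pd_polys: "p \<in> polys_in n \<Longrightarrow> pd j p \<in> polys_in n"
proof -
  assume p: "p \<in> polys_in n"
  show ?thesis unfolding polys_in_def
  proof (rule CollectI, rule ballI)
    fix m assume "m \<in> Poly_Mapping.keys (pd j p)"
    then have "m \<in> (\<Union>a\<in>Poly_Mapping.keys p. Poly_Mapping.keys (Poly_Mapping.single (a - Poly_Mapping.single j 1) (of_nat (Poly_Mapping.lookup a j) * Poly_Mapping.lookup p a)))"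
      unfolding pd_def by (rule subsetD[OF keys_sum])
    then obtain a where a: "a \<in> Poly_Mapping.keys p" and m: "m \<in> Poly_Mapping.keys (Poly_Mapping.single (a - Poly_Mapping.single j 1) (of_nat (Poly_Mapping.lookup a j) * Poly_Mapping.lookup p a))"
      by (rule UN_E)
    have "m = a - Poly_Mapping.single j 1" using m by (simp split: if_splits)
    then have "Poly_Mapping.keys m \<subseteq> Poly_Mapping.keys a" by (auto simp: in_keys_iff lookup_minus)
    then show "Poly_Mapping.keys m \<subseteq> {..<n}" using a p unfolding polys_in_def by blast
  qed
qed

lemma prime_pow: "prime_ideal_in n P \<Longrightarrow> g \<in> polys_in n \<Longrightarrow> g ^ N \<in> P \<Longrightarrow> g \<in> P"
proof (induction N)
  case 0
  then have one: "1 \<in> P" by simp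
  have "\<forall>r\<in>polys_in n. \<forall>a\<in>P. r * a \<in> P" using 0 unfolding prime_ideal_in_def ideal_in_def by blast
  then have "polys_in n \<subseteq> P" using one by (metis mult.right_neutral subsetI)
  with 0 show ?case unfolding prime_ideal_in_def ideal_in_def by blast
next
  case (Suc N)
  then have "g * g ^ N \<in> P" by simp
  with Suc show ?case unfolding prime_ideal_in_def using polys_in_pow by blast
qed

locale wm =
  fixes n :: nat and scale :: "'k::field_char_0 \<Rightarrow> 'm::ab_group_add \<Rightarrow> 'm"
    and xop dop :: "nat \<Rightarrow> 'm \<Rightarrow> 'm"
  assumes W: "weyl_module n scale xop dop"
begin

lemma WP1: "module scale"
  using W unfolding weyl_module_def by (elim conjE) assumption
lemma WP2: "\<forall>i<n. \<forall>u v. xop i (u + v) = xop i u + xop i v"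
  using W unfolding weyl_module_def by (elim conjE) assumption
lemma WP3: "\<forall>i<n. \<forall>u v. dop i (u + v) = dop i u + dop i v"
  using W unfolding weyl_module_def by (elim conjE) assumption
lemma WP4: "\<forall>i<n. \<forall>c v. xop i (scale c v) = scale c (xop i v)"
  using W unfolding weyl_module_def by (elim conjE) assumption
lemma WP5: "\<forall>i<n. \<forall>c v. dop i (scale c v) = scale c (dop i v)"
  using W unfolding weyl_module_def by (elim conjE) assumption
lemma WP6: "\<forall>i<n. \<forall>j<n. \<forall>v. xop i (xop j v) = xop j (xop i v)"
  using W unfolding weyl_module_def by (elim conjE) assumption
lemma WP7: "\<forall>i<n. \<forall>j<n. \<forall>v. dop i (dop j v) = dop j (dop i v)"
  using W unfolding weyl_module_def by (elim conjE) assumption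
lemma WP8: "\<forall>i<n. \<forall>j<n. \<forall>v. dop i (xop j v) - xop j (dop i v) = (if i = j then v else 0)"
  using W unfolding weyl_module_def by (elim conjE) assumption

sublocale module scale by (rule WP1)

lemma xadd: "i<n \<Longrightarrow> xop i (u+v) = xop i u + xop i v" using WP2 by blast
lemma dadd: "i<n \<Longrightarrow> dop i (u+v) = dop i u + dop i v" using WP3 by blast
lemma xscale: "i<n \<Longrightarrow> xop i (scale c v) = scale c (xop i v)" using WP4 by blast
lemma dscale: "i<n \<Longrightarrow> dop i (scale c v) = scale c (dop i v)" using WP5 by blast
lemma xx: "i<n \<Longrightarrow> j<n \<Longrightarrow> xop i (xop j v) = xop j (xop i v)" using WP6 by blast
lemma dx: "i<n \<Longrightarrow> j<n \<Longrightarrow> dop i (xop j v) = xop j (dop i v) + (if i = j then v else 0)"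
proof -
  assume "i<n" "j<n"
  then have "dop i (xop j v) - xop j (dop i v) = (if i = j then v else 0)"
    using WP8 by blast
  then show ?thesis by (simp add: algebra_simps)
qed

lemma x0: "i<n \<Longrightarrow> xop i 0 = 0" using xadd[of i 0 0] by simp
lemma d0: "i<n \<Longrightarrow> dop i 0 = 0" using dadd[of i 0 0] by simp

lemma dsum: "i<n \<Longrightarrow> dop i (sum g A) = (\<Sum>x\<in>A. dop i (g x))"
  by (rule additive_sum) (simp add: dadd)
lemma xsum: "i<n \<Longrightarrow> xop i (sum g A) = (\<Sum>x\<in>A. xop i (g x))"
  by (rule additive_sum) (simp add: xadd)

lemma xp_add: "i<n \<Longrightarrow> (xop i ^^ k) (u+v) = (xop i ^^ k) u + (xop i ^^ k) v"
  by (induction k) (auto simp: xadd)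
lemma xp_zero: "i<n \<Longrightarrow> (xop i ^^ k) 0 = 0"
  by (induction k) (auto simp: x0)
lemma xp_scale: "i<n \<Longrightarrow> (xop i ^^ k) (scale c v) = scale c ((xop i ^^ k) v)"
  by (induction k) (auto simp: xscale)
lemma xp_x: "i<n \<Longrightarrow> j<n \<Longrightarrow> (xop i ^^ k) (xop j v) = xop j ((xop i ^^ k) v)"
  by (induction k) (auto simp: xx)
lemma xp_xp: "i<n \<Longrightarrow> j<n \<Longrightarrow> (xop i ^^ k) ((xop j ^^ l) v) = (xop j ^^ l) ((xop i ^^ k) v)"
  by (induction l) (auto simp: xp_x)

lemma dxp: "i<n \<Longrightarrow> j<n \<Longrightarrow> dop j ((xop i ^^ k) v) =
   (xop i ^^ k) (dop j v) + (if i = j then scale (of_nat k) ((xop i ^^ (k - 1)) v) else 0)"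
proof (induction k)
  case 0 then show ?case by simp
next
  case (Suc k)
  show ?case
  proof (cases "i = j")
    case False
    with Suc show ?thesis by (simp add: dx)
  next
    case True
    have "dop j ((xop i ^^ Suc k) v) = xop i (dop j ((xop i ^^ k) v)) + (xop i ^^ k) v"
      using Suc True by (simp add: dx)
    also have "\<dots> = (xop i ^^ Suc k) (dop j v) + xop i (scale (of_nat k) ((xop i ^^ (k - 1)) v)) + (xop i ^^ k) v"
      using Suc True by (simp add: xadd)
    also have "xop i (scale (of_nat k) ((xop i ^^ (k - 1)) v)) = scale (of_nat k) ((xop i ^^ k) v)"
      using Suc by (cases k) (auto simp: xscale x0)
    finally show ?thesis using True by (simp add: scale_left_distrib add.assoc)
  qed
qed

lemma G_add: "set L \<subseteq> {..<n} \<Longrightarrow> G xop L m (u+v) = G xop L m u + G xop L m v"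
  by (induction L) (auto simp: xp_add)
lemma G_zero: "set L \<subseteq> {..<n} \<Longrightarrow> G xop L m 0 = 0"
  using G_add[of L m 0 0] by simp
lemma G_scale: "set L \<subseteq> {..<n} \<Longrightarrow> G xop L m (scale c v) = scale c (G xop L m v)"
  by (induction L) (auto simp: xp_scale)
lemma G_xp: "set L \<subseteq> {..<n} \<Longrightarrow> j<n \<Longrightarrow> G xop L m ((xop j ^^ k) v) = (xop j ^^ k) (G xop L m v)"
  by (induction L) (auto simp: xp_xp)
lemma G_x: "set L \<subseteq> {..<n} \<Longrightarrow> j<n \<Longrightarrow> G xop L m (xop j v) = xop j (G xop L m v)"
  using G_xp[of L j m 1] by simp
lemma G_G: "set L \<subseteq> {..<n} \<Longrightarrow> set L' \<subseteq> {..<n} \<Longrightarrow> G xop L m (G xop L' m' v) = G xop L' m' (G xop L m v)"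
  by (induction L' arbitrary: v) (auto simp: G_xp)
lemma G_plus: "set L \<subseteq> {..<n} \<Longrightarrow> G xop L (a + b) v = G xop L a (G xop L b v)"
proof (induction L arbitrary: v)
  case Nil then show ?case by simp
next
  case (Cons i L)
  then have "G xop L a ((xop i ^^ Poly_Mapping.lookup b i) (G xop L b v)) = (xop i ^^ Poly_Mapping.lookup b i) (G xop L a (G xop L b v))"
    by (simp add: G_xp)
  with Cons show ?case by (simp add: lookup_add funpow_add)
qed

lemma G_d: "set L \<subseteq> {..<n} \<Longrightarrow> distinct L \<Longrightarrow> j<n \<Longrightarrow> dop j (G xop L m v) =
   G xop L m (dop j v) + (if j \<in> set L then scale (of_nat (Poly_Mapping.lookup m j)) (G xop L (m - Poly_Mapping.single j 1) v) else 0)"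
proof (induction L arbitrary: v)
  case Nil then show ?case by simp
next
  case (Cons i L)
  have i: "i<n" using Cons by auto
  let ?y = "G xop L m v"
  have "dop j (G xop (i#L) m v) = (xop i ^^ Poly_Mapping.lookup m i) (dop j ?y) + (if i = j then scale (of_nat (Poly_Mapping.lookup m i)) ((xop i ^^ (Poly_Mapping.lookup m i - 1)) ?y) else 0)"
    using dxp[OF i Cons.prems(3)] by simp
  also have "\<dots> = G xop (i#L) m (dop j v) + (if j \<in> set L then scale (of_nat (Poly_Mapping.lookup m j)) ((xop i ^^ Poly_Mapping.lookup m i) (G xop L (m - Poly_Mapping.single j 1) v)) else 0)
     + (if i = j then scale (of_nat (Poly_Mapping.lookup m i)) ((xop i ^^ (Poly_Mapping.lookup m i - 1)) ?y) else 0)"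
    using Cons by (auto simp: xp_add xp_scale xp_zero)
  also have "\<dots> = G xop (i#L) m (dop j v) + (if j \<in> set (i#L) then scale (of_nat (Poly_Mapping.lookup m j)) (G xop (i#L) (m - Poly_Mapping.single j 1) v) else 0)"
  proof (cases "i = j")
    case True
    then have "j \<notin> set L" using Cons by auto
    moreover have "G xop L (m - Poly_Mapping.single j 1) v = ?y"
      by (rule G_cong) (use \<open>j \<notin> set L\<close> in \<open>auto simp: lookup_minus lookup_single when_def\<close>)
    ultimately show ?thesis using True by (simp add: lookup_minus)
  next
    case False
    then show ?thesis by (auto simp: lookup_minus lookup_single)
  qed
  finally show ?case .
qed


abbreviation mono where "mono m \<equiv> mono_act n xop m"
abbreviation pa where "pa p \<equiv> poly_act n scale xop p"

lemma set_upt_n: "set [0..<n] \<subseteq> {..<n}" by auto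

lemma mono_add: "mono m (u+v) = mono m u + mono m v"
  unfolding mono_act_G by (rule G_add[OF set_upt_n])
lemma mono_zero: "mono m 0 = 0"
  unfolding mono_act_G by (rule G_zero[OF set_upt_n])
lemma mono_scale: "mono m (scale c v) = scale c (mono m v)"
  unfolding mono_act_G by (rule G_scale[OF set_upt_n])
lemma mono_x: "j<n \<Longrightarrow> mono m (xop j v) = xop j (mono m v)"
  unfolding mono_act_G by (rule G_x[OF set_upt_n])
lemma mono_plus: "mono (a+b) v = mono a (mono b v)"
  unfolding mono_act_G by (rule G_plus[OF set_upt_n])
lemma mono_0: "mono 0 v = v"
proof -
  have "G xop L 0 v = v" for L by (induction L) auto
  then show ?thesis unfolding mono_act_G .
qed
lemma mono_d: "j<n \<Longrightarrow> dop j (mono m v) = mono m (dop j v) + scale (of_nat (Poly_Mapping.lookup m j)) (mono (m - Poly_Mapping.single j 1) v)"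
  unfolding mono_act_G using G_d[OF set_upt_n, of j m v] by simp
lemma mono_sum: "mono m (sum g A) = (\<Sum>x\<in>A. mono m (g x))"
  by (rule additive_sum) (simp add: mono_add)

lemma pa_gen: "finite A \<Longrightarrow> Poly_Mapping.keys p \<subseteq> A \<Longrightarrow> pa p v = (\<Sum>m\<in>A. scale (Poly_Mapping.lookup p m) (mono m v))"
  unfolding poly_act_def
  by (rule sum.mono_neutral_left) (auto simp: in_keys_iff)

lemma pa_add_p: "pa (p + q) v = pa p v + pa q v"
proof -
  let ?A = "Poly_Mapping.keys p \<union> Poly_Mapping.keys q"
  have "pa (p+q) v = (\<Sum>m\<in>?A. scale (Poly_Mapping.lookup (p+q) m) (mono m v))"
    by (rule pa_gen) (auto simp: keys_add)
  also have "\<dots> = (\<Sum>m\<in>?A. scale (Poly_Mapping.lookup p m) (mono m v)) + (\<Sum>m\<in>?A. scale (Poly_Mapping.lookup q m) (mono m v))"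
    by (simp add: lookup_add scale_left_distrib sum.distrib)
  also have "\<dots> = pa p v + pa q v"
    by (simp add: pa_gen[of "Poly_Mapping.keys p \<union> Poly_Mapping.keys q"])
  finally show ?thesis .
qed

lemma pa_zero_p: "pa 0 v = 0" by (simp add: poly_act_def)

lemma pa_sum_p: "pa (sum g A) v = (\<Sum>x\<in>A. pa (g x) v)"
  by (induction A rule: infinite_finite_induct) (auto simp: pa_zero_p pa_add_p)

lemma pa_single: "pa (Poly_Mapping.single a c) v = scale c (mono a v)"
  by (subst pa_gen[of "{a}"]) auto

lemma pa_add_v: "pa p (u+v) = pa p u + pa p v"
  by (simp add: poly_act_def mono_add scale_right_distrib sum.distrib)
lemma pa_zero_v: "pa p 0 = 0"
  by (simp add: poly_act_def mono_zero)
lemma pa_scale_v: "pa p (scale c v) = scale c (pa p v)"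
  by (simp add: poly_act_def mono_scale scale_sum_right mult.commute)
lemma pa_x: "j<n \<Longrightarrow> pa p (xop j v) = xop j (pa p v)"
  by (simp add: poly_act_def mono_x xsum xscale)
lemma pa_vsum: "pa p (sum g A) = (\<Sum>x\<in>A. pa p (g x))"
  by (rule additive_sum) (simp add: pa_add_v)

lemma pa_mult: "pa (p * q) v = pa p (pa q v)"
proof -
  let ?lp = "Poly_Mapping.lookup p" and ?lq = "Poly_Mapping.lookup q"
  have "p * q = (\<Sum>a\<in>Poly_Mapping.keys p. \<Sum>b\<in>Poly_Mapping.keys q. Poly_Mapping.single a (?lp a) * Poly_Mapping.single b (?lq b))"
    by (subst poly_sum_single[of p], subst poly_sum_single[of q]) (simp add: sum_distrib_left sum_distrib_right sum.swap[of _ "Poly_Mapping.keys q"])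
  then have "pa (p*q) v = (\<Sum>a\<in>Poly_Mapping.keys p. \<Sum>b\<in>Poly_Mapping.keys q. scale (?lp a * ?lq b) (mono (a+b) v))"
    by (simp add: pa_sum_p mult_single pa_single)
  also have "\<dots> = pa p (pa q v)"
    by (simp add: poly_act_def mono_sum mono_scale scale_sum_right mono_plus)
  finally show ?thesis .
qed

lemma pa_one: "pa 1 v = v"
proof -
  have "(1::'k mpoly) = Poly_Mapping.single 0 1" by simp
  then show ?thesis using pa_single[of 0 1 v] by (simp add: mono_0 del: single_one)
qed

lemma pa_pow: "pa (p ^ k) v = (pa p ^^ k) v"
  by (induction k arbitrary: v) (auto simp: pa_one pa_mult)

lemma pa_comm: "pa p (pa q v) = pa q (pa p v)"
  by (metis pa_mult mult.commute)

lemma pa_d: "j<n \<Longrightarrow> dop j (pa p v) = pa p (dop j v) + pa (pd j p) v"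
proof -
  assume j: "j<n"
  let ?lp = "Poly_Mapping.lookup p" and ?e = "Poly_Mapping.single j (1::nat)"
  have "dop j (pa p v) = (\<Sum>a\<in>Poly_Mapping.keys p. scale (?lp a) (mono a (dop j v)) + scale (?lp a) (scale (of_nat (Poly_Mapping.lookup a j)) (mono (a - ?e) v)))"
    by (simp add: poly_act_def dsum j dscale mono_d scale_right_distrib)
  also have "\<dots> = pa p (dop j v) + (\<Sum>a\<in>Poly_Mapping.keys p. scale (of_nat (Poly_Mapping.lookup a j) * ?lp a) (mono (a - ?e) v))"
    by (simp add: sum.distrib poly_act_def mult.commute)
  also have "(\<Sum>a\<in>Poly_Mapping.keys p. scale (of_nat (Poly_Mapping.lookup a j) * ?lp a) (mono (a - ?e) v)) = pa (pd j p) v"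
    by (simp add: pd_def pa_sum_p pa_single)
  finally show ?thesis .
qed


inductive_set gen :: "'m \<Rightarrow> 'm set" for w where
  g_w: "w \<in> gen w"
| g_0: "0 \<in> gen w"
| g_add: "u \<in> gen w \<Longrightarrow> v \<in> gen w \<Longrightarrow> u + v \<in> gen w"
| g_scale: "u \<in> gen w \<Longrightarrow> scale c u \<in> gen w"
| g_x: "i < n \<Longrightarrow> u \<in> gen w \<Longrightarrow> xop i u \<in> gen w"
| g_d: "i < n \<Longrightarrow> u \<in> gen w \<Longrightarrow> dop i u \<in> gen w"

lemma gen_sub: "weyl_submodule n scale xop dop (gen w)"
  unfolding weyl_submodule_def by (auto intro: gen.intros)

lemma gen_univ: "simple_weyl_module n scale xop dop \<Longrightarrow> w \<noteq> 0 \<Longrightarrow> gen w = UNIV"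
  unfolding simple_weyl_module_def using gen_sub[of w] g_w[of w] by blast

lemma dpow: "j<n \<Longrightarrow> dop j (pa (f ^ Suc k) v) = pa (f ^ Suc k) (dop j v) + scale (of_nat (Suc k)) (pa (f ^ k * pd j f) v)"
proof (induction k arbitrary: v)
  case 0 then show ?case by (simp add: pa_d)
next
  case (Suc k)
  have "dop j (pa (f ^ Suc (Suc k)) v) = dop j (pa f (pa (f ^ Suc k) v))"
    by (simp only: power_Suc[of f "Suc k"] pa_mult)
  also have "\<dots> = pa f (pa (f ^ Suc k) (dop j v) + scale (of_nat (Suc k)) (pa (f ^ k * pd j f) v)) + pa (pd j f) (pa (f ^ Suc k) v)"
    using Suc by (simp add: pa_d)
  also have "\<dots> = pa (f ^ Suc (Suc k)) (dop j v) + scale (of_nat (Suc k)) (pa (f ^ Suc k * pd j f) v) + pa (f ^ Suc k * pd j f) v"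
    by (simp add: pa_add_v pa_scale_v pa_mult[symmetric] ac_simps)
  also have "\<dots> = pa (f ^ Suc (Suc k)) (dop j v) + scale (of_nat (Suc (Suc k))) (pa (f ^ Suc k * pd j f) v)"
  proof -
    have "scale (of_nat (Suc (Suc k))) (pa (f ^ Suc k * pd j f) v) = scale (of_nat (Suc k)) (pa (f ^ Suc k * pd j f) v) + pa (f ^ Suc k * pd j f) v"
      by (metis add.commute of_nat_Suc scale_left_distrib scale_one)
    then show ?thesis by (simp only: add.assoc)
  qed
  finally show ?case .
qed

lemma lemC: assumes fw: "pa f w = 0" and y: "y \<in> gen w" shows "\<exists>N. pa (f ^ N) y = 0"
  using y
proof induction
  case g_w then show ?case using fw by (intro exI[of _ 1]) simp
next
  case g_0 then show ?case by (auto simp: pa_zero_v)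
next
  case (g_add u v)
  then obtain N1 N2 where "pa (f ^ N1) u = 0" "pa (f ^ N2) v = 0" by blast
  then have "pa (f ^ (N2 + N1)) u = 0" "pa (f ^ (N1 + N2)) v = 0"
    by (simp_all add: power_add pa_mult pa_zero_v)
  then show ?case by (intro exI[of _ "N1+N2"]) (simp add: pa_add_v add.commute)
next
  case (g_scale u c) then show ?case by (metis pa_scale_v scale_zero_right)
next
  case (g_x i u) then show ?case by (metis pa_x x0)
next
  case (g_d i u)
  then obtain N where N: "pa (f ^ N) u = 0" by blast
  have "pa (f ^ Suc N) (dop i u) = dop i (pa (f ^ Suc N) u) - scale (of_nat (Suc N)) (pa (f ^ N * pd i f) u)"
    using dpow[OF g_d(1), of f N u] by (simp add: algebra_simps)
  also have "\<dots> = 0"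
    using N g_d(1) by (simp add: pa_mult mult.commute[of "f ^ N"] pa_zero_v d0 del: power_Suc) (simp add: mult.commute pa_mult pa_zero_v d0)
  finally show ?case by blast
qed

lemma ann_sub:
  assumes S: "simple_weyl_module n scale xop dop" and Pp: "prime_ideal_in n P"
    and Pv: "P = ann_in n scale xop v0" and y: "y \<noteq> 0" and g: "g \<in> polys_in n" and gy: "pa g y = 0"
  shows "g \<in> P"
proof -
  have "v0 \<in> gen y" using gen_univ[OF S y] by simp
  then obtain N where "pa (g ^ N) v0 = 0" using lemC[OF gy] by blast
  then have "g ^ N \<in> P" using Pv polys_in_pow[OF g] unfolding ann_in_def by auto
  then show ?thesis using prime_pow[OF Pp g] by blast
qed

lemma lemD:
  assumes S: "simple_weyl_module n scale xop dop" and Pp: "prime_ideal_in n P"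
    and Pv: "P = ann_in n scale xop v0" and f: "f \<in> P" and j: "j < n" and y: "y \<noteq> 0"
    and hyp: "\<And>m. m \<ge> 1 \<Longrightarrow> pa (f ^ m) y = 0 \<Longrightarrow> pa (f ^ m) (dop j y) = 0"
  shows "pd j f \<in> P"
proof -
  have fP: "f \<in> polys_in n" using f Pp unfolding prime_ideal_in_def ideal_in_def by auto
  have v0: "v0 \<noteq> 0"
  proof
    assume "v0 = 0"
    then have "P = polys_in n" using Pv by (auto simp: ann_in_def pa_zero_v)
    then show False using Pp unfolding prime_ideal_in_def by auto
  qed
  have fv: "pa f v0 = 0" using f Pv unfolding ann_in_def by auto
  have "y \<in> gen v0" using gen_univ[OF S v0] by simp
  then have ex: "\<exists>N. pa (f ^ N) y = 0" using lemC[OF fv] by blast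
  define m where "m = (LEAST N. pa (f ^ N) y = 0)"
  have m0: "pa (f ^ m) y = 0" unfolding m_def using LeastI_ex[OF ex] .
  have "m \<noteq> 0" using m0 y by (metis pa_one power_0)
  then obtain k where k: "m = Suc k" by (cases m) auto
  have nz: "pa (f ^ k) y \<noteq> 0" using not_less_Least[of k "\<lambda>N. pa (f ^ N) y = 0"] k unfolding m_def by auto
  have "pa (f ^ m) (dop j y) = 0" using hyp[of m] m0 k by simp
  then have "0 = scale (of_nat (Suc k)) (pa (f ^ k * pd j f) y)"
    using dpow[OF j, of f k y] m0 k d0[OF j] by simp
  then have "scale (inverse (of_nat (Suc k))) (scale (of_nat (Suc k)) (pa (f ^ k * pd j f) y)) = 0"
    by simp
  then have "pa (pd j f) (pa (f ^ k) y) = 0"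
    by (simp add: pa_mult[symmetric] mult.commute del: of_nat_Suc)
  then show ?thesis using ann_sub[OF S Pp Pv nz pd_polys[OF fP]] by blast
qed

end


lemma lookup_pd: "Poly_Mapping.lookup (pd j p) m = of_nat (Poly_Mapping.lookup m j + 1) * Poly_Mapping.lookup p (m + Poly_Mapping.single j 1)"
proof -
  let ?e = "Poly_Mapping.single j (1::nat)"
  let ?h = "\<lambda>a. of_nat (Poly_Mapping.lookup a j) * Poly_Mapping.lookup p a"
  have eq: "(?h a when a - ?e = m) = (if a = m + ?e then ?h a else 0)" for a
  proof (cases "Poly_Mapping.lookup a j = 0")
    case True
    then have "a \<noteq> m + ?e" by (auto simp: lookup_add)
    with True show ?thesis by (simp add: when_def)
  next
    case False
    have "a - ?e = m \<longleftrightarrow> a = m + ?e"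
    proof
      assume "a - ?e = m" then show "a = m + ?e"
        using False by (intro poly_mapping_eqI) (auto simp: lookup_add lookup_minus lookup_single when_def)
    next
      assume "a = m + ?e" then show "a - ?e = m"
        by (intro poly_mapping_eqI) (simp add: lookup_add lookup_minus)
    qed
    then show ?thesis by (simp add: when_def)
  qed
  have "Poly_Mapping.lookup (pd j p) m = (\<Sum>a\<in>Poly_Mapping.keys p. ?h a when a - ?e = m)"
    by (simp add: pd_def lookup_sum lookup_single)
  also have "\<dots> = (\<Sum>a\<in>Poly_Mapping.keys p. if a = m + ?e then ?h a else 0)"
    by (rule sum.cong) (simp_all only: eq)
  also have "\<dots> = ?h (m + ?e)"
    by (simp add: sum.delta in_keys_iff)
  finally show ?thesis by (simp add: lookup_add)
qed

lemma lookup_pd_iter: "of_nat (fact (Poly_Mapping.lookup m j)) * Poly_Mapping.lookup ((pd j ^^ k) p) m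
   = (of_nat (fact (Poly_Mapping.lookup m j + k)) :: 'k::comm_ring_1) * Poly_Mapping.lookup p (m + Poly_Mapping.single j k)"
proof (induction k arbitrary: m)
  case 0 then show ?case by simp
next
  case (Suc k)
  let ?e = "Poly_Mapping.single j (1::nat)"
  have lj: "Poly_Mapping.lookup (m + ?e) j = Suc (Poly_Mapping.lookup m j)"
    by (simp add: lookup_add)
  have "of_nat (fact (Poly_Mapping.lookup m j)) * Poly_Mapping.lookup ((pd j ^^ Suc k) p) m
     = (of_nat (fact (Poly_Mapping.lookup m j)) * of_nat (Poly_Mapping.lookup m j + 1)) * Poly_Mapping.lookup ((pd j ^^ k) p) (m + ?e)"
    by (simp only: funpow.simps comp_apply lookup_pd mult.assoc)
  also have "of_nat (fact (Poly_Mapping.lookup m j)) * of_nat (Poly_Mapping.lookup m j + 1) = (of_nat (fact (Poly_Mapping.lookup (m + ?e) j)) :: 'k)"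
    unfolding lj
  proof -
    have "fact (Suc (Poly_Mapping.lookup m j)) = fact (Poly_Mapping.lookup m j) * (Poly_Mapping.lookup m j + 1)"
      by (simp add: mult.commute)
    then show "of_nat (fact (Poly_Mapping.lookup m j)) * of_nat (Poly_Mapping.lookup m j + 1) = (of_nat (fact (Suc (Poly_Mapping.lookup m j))) :: 'k)"
      by (simp only: of_nat_mult)
  qed
  also have "\<dots> * Poly_Mapping.lookup ((pd j ^^ k) p) (m + ?e) = of_nat (fact (Poly_Mapping.lookup (m + ?e) j + k)) * Poly_Mapping.lookup p (m + ?e + Poly_Mapping.single j k)"
    by (rule Suc)
  also have "m + ?e + Poly_Mapping.single j k = m + Poly_Mapping.single j (Suc k)"
    by (simp only: add.assoc single_add[symmetric] plus_1_eq_Suc)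
  also have "Poly_Mapping.lookup (m + ?e) j + k = Poly_Mapping.lookup m j + Suc k"
    unfolding lj by simp
  finally show ?case .
qed

lemma lookup_single_mult:
  fixes c :: "'b::comm_semiring_1"
  shows "Poly_Mapping.lookup (Poly_Mapping.single (a::'a::cancel_comm_monoid_add) c * p) m =
    (\<Sum>b\<in>Poly_Mapping.keys p. c * Poly_Mapping.lookup p b when a + b = m)"
proof -
  have "Poly_Mapping.single a c * p = (\<Sum>b\<in>Poly_Mapping.keys p. Poly_Mapping.single (a + b) (c * Poly_Mapping.lookup p b))"
    by (subst poly_sum_single[of p]) (simp add: sum_distrib_left mult_single)
  then show ?thesis by (simp add: lookup_sum lookup_single)
qed

lemma lookup_single_mult1:
  fixes c :: "'b::comm_semiring_1"
  shows "Poly_Mapping.lookup (Poly_Mapping.single (a::'a::cancel_comm_monoid_add) c * p) (a + b) = c * Poly_Mapping.lookup p b"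
  by (simp add: lookup_single_mult when_def in_keys_iff)

lemma QR_zero: "0 \<in> ideal_gen_in n Q"
  unfolding ideal_gen_in_def by (rule CollectI, rule exI[of _ "{}"], rule exI[of _ "\<lambda>_. 0"]) simp

lemma QR_gen: "q \<in> Q \<Longrightarrow> r \<in> polys_in n \<Longrightarrow> r * q \<in> ideal_gen_in n Q"
  unfolding ideal_gen_in_def by (rule CollectI, rule exI[of _ "{q}"], rule exI[of _ "\<lambda>_. r"]) simp

lemma QR_add: "x \<in> ideal_gen_in n Q \<Longrightarrow> y \<in> ideal_gen_in n Q \<Longrightarrow> x + y \<in> ideal_gen_in n Q"
proof -
  assume "x \<in> ideal_gen_in n Q" "y \<in> ideal_gen_in n Q"
  then obtain F1 r1 F2 r2 where F1: "finite F1" "F1 \<subseteq> Q" "\<forall>q\<in>F1. r1 q \<in> polys_in n" "x = (\<Sum>q\<in>F1. r1 q * q)"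
    and F2: "finite F2" "F2 \<subseteq> Q" "\<forall>q\<in>F2. r2 q \<in> polys_in n" "y = (\<Sum>q\<in>F2. r2 q * q)"
    unfolding ideal_gen_in_def mem_Collect_eq by (elim exE conjE) (rule that, assumption+)
  define r where "r q = (if q \<in> F1 then r1 q else 0) + (if q \<in> F2 then r2 q else 0)" for q
  have pz: "(0::'a mpoly) \<in> polys_in n" unfolding polys_in_def by simp
  have padd: "a \<in> polys_in n \<Longrightarrow> b \<in> polys_in n \<Longrightarrow> a + b \<in> polys_in n" for a b :: "'a mpoly"
    unfolding polys_in_def using keys_add[of a b] by (auto dest: subsetD)
  have "(\<Sum>q\<in>F1 \<union> F2. r q * q) = (\<Sum>q\<in>F1 \<union> F2. (if q \<in> F1 then r1 q * q else 0)) + (\<Sum>q\<in>F1 \<union> F2. (if q \<in> F2 then r2 q * q else 0))"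
  proof -
    have "r q * q = (if q \<in> F1 then r1 q * q else 0) + (if q \<in> F2 then r2 q * q else 0)" for q
      by (simp add: r_def distrib_right)
    then show ?thesis by (simp only: sum.distrib)
  qed
  also have "\<dots> = x + y"
  proof -
    have fin: "finite (F1 \<union> F2)" using F1 F2 by simp
    have "(\<Sum>q\<in>F1 \<union> F2. (if q \<in> F1 then r1 q * q else 0)) = (\<Sum>q\<in>(F1 \<union> F2) \<inter> F1. r1 q * q)"
      by (rule sum.inter_restrict[OF fin, symmetric])
    moreover have "(\<Sum>q\<in>F1 \<union> F2. (if q \<in> F2 then r2 q * q else 0)) = (\<Sum>q\<in>(F1 \<union> F2) \<inter> F2. r2 q * q)"
      by (rule sum.inter_restrict[OF fin, symmetric])
    moreover have "(F1 \<union> F2) \<inter> F1 = F1" "(F1 \<union> F2) \<inter> F2 = F2" by blast+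
    ultimately show ?thesis using F1(4) F2(4) by simp
  qed
  finally have "x + y = (\<Sum>q\<in>F1 \<union> F2. r q * q)" by simp
  moreover have "\<forall>q\<in>F1 \<union> F2. r q \<in> polys_in n"
  proof
    fix q assume "q \<in> F1 \<union> F2"
    have "(if q \<in> F1 then r1 q else 0) \<in> polys_in n" using F1(3) pz by simp
    moreover have "(if q \<in> F2 then r2 q else 0) \<in> polys_in n" using F2(3) pz by simp
    ultimately show "r q \<in> polys_in n" unfolding r_def by (rule padd)
  qed
  ultimately show ?thesis unfolding ideal_gen_in_def
    by (intro CollectI exI[of _ "F1 \<union> F2"] exI[of _ r]) (use F1 F2 in simp)
qed

lemma QR_sub_P: assumes "ideal_in n P" "Q \<subseteq> P" shows "ideal_gen_in n Q \<subseteq> P"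
proof
  fix x assume "x \<in> ideal_gen_in n Q"
  then obtain F r where F: "finite F" "F \<subseteq> Q" "\<forall>q\<in>F. r q \<in> polys_in n" "x = (\<Sum>q\<in>F. r q * q)"
    unfolding ideal_gen_in_def by blast
  have "(\<Sum>q\<in>F. r q * q) \<in> P" using F(1-3)
  proof (induction F rule: finite_induct)
    case empty then show ?case using assms unfolding ideal_in_def by simp
  next
    case (insert a F)
    then have "r a * a \<in> P" using assms unfolding ideal_in_def by blast
    with insert show ?case using assms unfolding ideal_in_def by simp
  qed
  then show "x \<in> P" using F by simp
qed



lemma stable_ext:
  fixes P :: "'k::field_char_0 mpoly set"
  assumes I: "ideal_in n P" and n: "n \<ge> 1" and st: "\<forall>f\<in>P. pd (n - 1) f \<in> P"
  shows "f \<in> P \<Longrightarrow> (\<forall>m\<in>Poly_Mapping.keys f. Poly_Mapping.lookup m (n - 1) < d) \<Longrightarrow> f \<in> ideal_gen_in n (P \<inter> polys_in (n - 1))"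
proof (induction d arbitrary: f)
  case 0
  have "Poly_Mapping.lookup f m = 0" for m
  proof (rule ccontr)
    assume "Poly_Mapping.lookup f m \<noteq> 0"
    then have "m \<in> Poly_Mapping.keys f" by (simp add: in_keys_iff)
    with 0(2) show False by blast
  qed
  then have "f = 0" by (intro poly_mapping_eqI) simp
  then show ?case by (simp add: QR_zero)
next
  case (Suc d)
  let ?j = "n - 1"
  let ?Q = "P \<inter> polys_in (n - 1)"
  have PR: "P \<subseteq> polys_in n" using I unfolding ideal_in_def by (elim conjE)
  have Pmul: "\<forall>r\<in>polys_in n. \<forall>a\<in>P. r * a \<in> P" using I unfolding ideal_in_def by (elim conjE)
  have Padd: "\<forall>a\<in>P. \<forall>b\<in>P. a + b \<in> P" using I unfolding ideal_in_def by (elim conjE)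
  have fR: "f \<in> polys_in n" using Suc.prems(1) PR by (rule subsetD[rotated])
  have bound: "Poly_Mapping.lookup f m = 0" if "Poly_Mapping.lookup m ?j > d" for m
  proof (rule ccontr)
    assume "Poly_Mapping.lookup f m \<noteq> 0"
    then have "m \<in> Poly_Mapping.keys f" by (simp add: in_keys_iff)
    with Suc.prems(2) have "Poly_Mapping.lookup m ?j < Suc d" by blast
    with that show False by simp
  qed
  define c where "c = (pd ?j ^^ d) f"
  have cP: "c \<in> P" unfolding c_def
  proof (induction d)
    case 0 show ?case using Suc.prems(1) by simp
  next
    case (Suc d) then show ?case using st by simp
  qed
  have cform: "of_nat (fact (Poly_Mapping.lookup m ?j)) * Poly_Mapping.lookup c m
      = (of_nat (fact (Poly_Mapping.lookup m ?j + d)) :: 'k) * Poly_Mapping.lookup f (m + Poly_Mapping.single ?j d)" for m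
    unfolding c_def by (rule lookup_pd_iter)
  have cj: "Poly_Mapping.lookup c m = 0" if "Poly_Mapping.lookup m ?j > 0" for m
  proof -
    have "Poly_Mapping.lookup (m + Poly_Mapping.single ?j d) ?j > d"
      using that by (simp add: lookup_add)
    then have "Poly_Mapping.lookup f (m + Poly_Mapping.single ?j d) = 0"
      by (rule bound)
    then show ?thesis using cform[of m] by simp
  qed
  have cQ: "c \<in> polys_in ?j" unfolding polys_in_def
  proof (rule CollectI, rule ballI)
    fix m assume m: "m \<in> Poly_Mapping.keys c"
    then have mj: "Poly_Mapping.lookup m ?j = 0" using cj by (auto simp: in_keys_iff)
    then have "Poly_Mapping.lookup f (m + Poly_Mapping.single ?j d) \<noteq> 0" using cform[of m] m by (auto simp: in_keys_iff)
    then have "m + Poly_Mapping.single ?j d \<in> Poly_Mapping.keys f" by (simp add: in_keys_iff)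
    then have K: "Poly_Mapping.keys (m + Poly_Mapping.single ?j d) \<subseteq> {..<n}" using fR unfolding polys_in_def by blast
    show "Poly_Mapping.keys m \<subseteq> {..<?j}"
    proof (rule subsetI)
      fix x assume x: "x \<in> Poly_Mapping.keys m"
      then have "x \<in> Poly_Mapping.keys (m + Poly_Mapping.single ?j d)" by (simp add: in_keys_iff lookup_add)
      with K have "x < n" by blast
      moreover have "x \<noteq> ?j" using x mj by (auto simp: in_keys_iff)
      ultimately show "x \<in> {..<?j}" by simp
    qed
  qed
  define r :: "'k mpoly" where "r = Poly_Mapping.single (Poly_Mapping.single ?j d) (inverse (of_nat (fact d)))"
  have rR: "r \<in> polys_in n"
    unfolding polys_in_def mem_Collect_eq
  proof (rule ballI)
    fix m assume "m \<in> Poly_Mapping.keys r"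
    then have "m = Poly_Mapping.single ?j d" unfolding r_def by (simp split: if_splits)
    then show "Poly_Mapping.keys m \<subseteq> {..<n}" using n by (simp split: if_splits)
  qed
  have mrR: "- r \<in> polys_in n" using rR unfolding polys_in_def by simp
  define t where "t = r * c"
  have tP: "t \<in> P" using Pmul rR cP unfolding t_def by blast
  have tQR: "t \<in> ideal_gen_in n ?Q" unfolding t_def using cP cQ rR by (intro QR_gen) auto
  define g where "g = f + (- r) * c"
  have "(- r) * c \<in> P" using Pmul mrR cP by blast
  then have gP: "g \<in> P" unfolding g_def using Suc.prems(1) Padd by blast
  have gt: "g = f - t" by (simp add: g_def t_def)
  have gk: "\<forall>m\<in>Poly_Mapping.keys g. Poly_Mapping.lookup m ?j < d"
  proof (rule ccontr)
    assume "\<not> ?thesis"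
    then obtain m where m: "m \<in> Poly_Mapping.keys g" "Poly_Mapping.lookup m ?j \<ge> d" by (auto simp: not_less)
    define b where "b = m - Poly_Mapping.single ?j d"
    have mb: "m = Poly_Mapping.single ?j d + b"
      using m(2) by (intro poly_mapping_eqI) (auto simp: b_def lookup_add lookup_minus lookup_single when_def)
    have bj: "Poly_Mapping.lookup b ?j = Poly_Mapping.lookup m ?j - d"
      by (simp add: b_def lookup_minus)
    have lt: "Poly_Mapping.lookup t m = inverse (of_nat (fact d)) * Poly_Mapping.lookup c b"
      unfolding t_def r_def mb by (rule lookup_single_mult1)
    have "Poly_Mapping.lookup t m = Poly_Mapping.lookup f m"
    proof (cases "Poly_Mapping.lookup m ?j = d")
      case True
      then have "Poly_Mapping.lookup b ?j = 0" using bj by simp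
      moreover have "b + Poly_Mapping.single ?j d = m" using mb by (simp add: add.commute)
      ultimately have "Poly_Mapping.lookup c b = of_nat (fact d) * Poly_Mapping.lookup f m"
        using cform[of b] by simp
      then show ?thesis using lt by simp
    next
      case False
      then have gt': "Poly_Mapping.lookup m ?j > d" using m(2) by simp
      then have "Poly_Mapping.lookup f m = 0" by (rule bound)
      moreover have "Poly_Mapping.lookup b ?j > 0" using bj gt' by simp
      then have "Poly_Mapping.lookup c b = 0" by (rule cj)
      ultimately show ?thesis using lt by simp
    qed
    then have "Poly_Mapping.lookup g m = 0" by (simp add: gt lookup_minus)
    with m(1) show False by (simp add: in_keys_iff)
  qed
  have "g \<in> ideal_gen_in n ?Q" using Suc.IH[OF gP gk] .
  then have "g + t \<in> ideal_gen_in n ?Q" using tQR by (rule QR_add)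
  then show ?case by (simp add: gt)
qed

lemma stable_ext2:
  fixes P :: "'k::field_char_0 mpoly set"
  assumes I: "ideal_in n P" and n: "n \<ge> 1" and st: "\<forall>f\<in>P. pd (n - 1) f \<in> P"
  shows "P = ideal_gen_in n (P \<inter> polys_in (n - 1))"
proof
  show "P \<subseteq> ideal_gen_in n (P \<inter> polys_in (n - 1))"
  proof
    fix f assume f: "f \<in> P"
    let ?d = "Suc (Max (insert 0 ((\<lambda>m. Poly_Mapping.lookup m (n - 1)) ` Poly_Mapping.keys f)))"
    have "\<forall>m\<in>Poly_Mapping.keys f. Poly_Mapping.lookup m (n - 1) < ?d"
      by (auto simp: less_Suc_eq_le)
    then show "f \<in> ideal_gen_in n (P \<inter> polys_in (n - 1))" using stable_ext[OF I n st f] by blast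
  qed
  show "ideal_gen_in n (P \<inter> polys_in (n - 1)) \<subseteq> P" by (rule QR_sub_P[OF I]) auto
qed

theorem theorem7p1:
  fixes n :: nat
    and scale :: "'k::field_char_0 \<Rightarrow> 'm::ab_group_add \<Rightarrow> 'm"
    and xop dop :: "nat \<Rightarrow> 'm \<Rightarrow> 'm"
    and P :: "'k mpoly set"
  assumes "n \<ge> 1"
    and "simple_weyl_module n scale xop dop"
    and "Ass_in n scale xop = {P}"
  defines "Q \<equiv> P \<inter> polys_in (n - 1)"
  shows "(range (dop (n - 1)) = UNIV \<longrightarrow> P = ideal_gen_in n Q)
       \<and> ((\<exists>v. v \<noteq> 0 \<and> dop (n - 1) v = 0) \<longrightarrow> P = ideal_gen_in n Q)"
proof -
  note n = assms(1) and S = assms(2)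
  interpret wm n scale xop dop using S unfolding simple_weyl_module_def by unfold_locales blast
  have "P \<in> Ass_in n scale xop" using assms(3) by simp
  then obtain v0 where Pp: "prime_ideal_in n P" and Pv: "P = ann_in n scale xop v0"
    unfolding Ass_in_def by blast
  have I: "ideal_in n P" using Pp unfolding prime_ideal_in_def by blast
  have j: "n - 1 < n" using n by simp
  have v0: "v0 \<noteq> 0"
  proof
    assume "v0 = 0"
    then have "P = polys_in n" using Pv by (auto simp: ann_in_def pa_zero_v)
    then show False using Pp unfolding prime_ideal_in_def by auto
  qed
  show ?thesis
  proof (intro conjI impI)
    assume surj: "range (dop (n - 1)) = UNIV"
    then obtain u where u: "dop (n - 1) u = v0" by (metis UNIV_I image_iff)
    have u0: "u \<noteq> 0" using u v0 d0[OF j] by auto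
    have "\<forall>f\<in>P. pd (n - 1) f \<in> P"
    proof
      fix f assume f: "f \<in> P"
      have fv: "poly_act n scale xop f v0 = 0" using f Pv unfolding ann_in_def by auto
      show "pd (n - 1) f \<in> P"
      proof (rule lemD[OF S Pp Pv f j u0])
        fix m :: nat assume "m \<ge> 1"
        then obtain k where "m = Suc k" by (cases m) auto
        then show "poly_act n scale xop (f ^ m) (dop (n - 1) u) = 0"
        proof -
          have "poly_act n scale xop (f ^ Suc k) v0 = poly_act n scale xop (f ^ k) (poly_act n scale xop f v0)"
            by (simp only: power_Suc mult.commute[of f] pa_mult)
          then show ?thesis using fv u \<open>m = Suc k\<close> by (simp add: pa_zero_v)
        qed
      qed
    qed
    then show "P = ideal_gen_in n Q" unfolding Q_def by (rule stable_ext2[OF I n])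
  next
    assume "\<exists>v. v \<noteq> 0 \<and> dop (n - 1) v = 0"
    then obtain v where v: "v \<noteq> 0" "dop (n - 1) v = 0" by blast
    have "\<forall>f\<in>P. pd (n - 1) f \<in> P"
    proof
      fix f assume f: "f \<in> P"
      show "pd (n - 1) f \<in> P"
        by (rule lemD[OF S Pp Pv f j v(1)]) (use v(2) in \<open>simp add: pa_zero_v\<close>)
    qed
    then show "P = ideal_gen_in n Q" unfolding Q_def by (rule stable_ext2[OF I n])
  qed
qed

end
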